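(* Let $n\ge 1$ and let $\overrightarrow{K_{1,n}}$ be an orientation of the star $K_{1,n}$ in which exactly $t$ of the $n$ leaves are sources, $0\le t\le n$. Then $\overrightarrow{K_{1,n}}$ is $\{1\}$-antimagic if and only if either $n=1$, or $n=2$ and $t=1$.
   Context: An oriented graph $\overrightarrow{G}$ is a directed graph obtained from a simple undirected graph by giving each edge one direction. For vertices $u,v$, $d(u,v)$ is the length of a shortest directed path from $u$ to $v$ ($d(u,u)=0$, and $d(u,v)=\infty$ if there is no such path). Let $\partial=\max\{d(u,v)<\infty : u,v\in V(\overrightarrow{G})\}$. A distance set is a nonempty $D\subseteq\{0,1,\dots,\partial\}$. The $D$-neighborhood of $u$ is $N_D(u)=\{v\in V(\overrightarrow{G}) : d(u,v)\in D\}$. For a bijection $f:V(\overrightarrow{G})\to\{1,\dots,|V(\overrightarrow{G})|\}$, the $D$-weight of $u$ is $\omega_D(u)=\sum_{v\in N_D(u)} f(v)$ (empty sum $=0$). $\overrightarrow{G}$ is $D$-antimagic if $D\subseteq\{0,\dots,\partial\}$ and there is such a bijection $f$ with all $D$-weights pairwise distinct. In an oriented star $\overrightarrow{K_{1,n}}$ the center is the vertex of degree $n$ and the leaves are the vertices of degree $1$; a leaf is a source if its arc points toward the center, and a sink otherwise. *)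

theory Defs
  imports Main "HOL-Library.Extended_Nat"
begin

definition oriented_graph :: "'a set \<Rightarrow> ('a \<times> 'a) set \<Rightarrow> bool" where
  "oriented_graph V A \<longleftrightarrow> finite V \<and> A \<subseteq> V \<times> V \<and>
     (\<forall>u. (u, u) \<notin> A) \<and> (\<forall>u v. (u, v) \<in> A \<longrightarrow> (v, u) \<notin> A)"

definition dist :: "('a \<times> 'a) set \<Rightarrow> 'a \<Rightarrow> 'a \<Rightarrow> enat" where
  "dist A u v = (if \<exists>k. (u, v) \<in> A ^^ k then enat (LEAST k. (u, v) \<in> A ^^ k) else \<infinity>)"

definition max_dist :: "'a set \<Rightarrow> ('a \<times> 'a) set \<Rightarrow> nat" where
  "max_dist V A = Max {k. \<exists>u\<in>V. \<exists>v\<in>V. dist A u v = enat k}"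

definition D_neighborhood :: "'a set \<Rightarrow> ('a \<times> 'a) set \<Rightarrow> nat set \<Rightarrow> 'a \<Rightarrow> 'a set" where
  "D_neighborhood V A D u = {v \<in> V. dist A u v \<in> enat ` D}"

definition D_weight :: "'a set \<Rightarrow> ('a \<times> 'a) set \<Rightarrow> nat set \<Rightarrow> ('a \<Rightarrow> nat) \<Rightarrow> 'a \<Rightarrow> nat" where
  "D_weight V A D f u = (\<Sum>v\<in>D_neighborhood V A D u. f v)"

definition D_antimagic :: "'a set \<Rightarrow> ('a \<times> 'a) set \<Rightarrow> nat set \<Rightarrow> bool" where
  "D_antimagic V A D \<longleftrightarrow> D \<noteq> {} \<and> D \<subseteq> {0..max_dist V A} \<and>
     (\<exists>f. bij_betw f V {1..card V} \<and> inj_on (D_weight V A D f) V)"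

definition oriented_star :: "'a set \<Rightarrow> ('a \<times> 'a) set \<Rightarrow> 'a \<Rightarrow> nat \<Rightarrow> nat \<Rightarrow> bool" where
  "oriented_star V A c n t \<longleftrightarrow> finite V \<and> c \<in> V \<and> card V = n + 1 \<and>
     A \<subseteq> ((V - {c}) \<times> {c}) \<union> ({c} \<times> (V - {c})) \<and>
     (\<forall>v \<in> V - {c}. ((v, c) \<in> A \<or> (c, v) \<in> A) \<and> \<not> ((v, c) \<in> A \<and> (c, v) \<in> A)) \<and>
     card {v \<in> V - {c}. (v, c) \<in> A} = t"

end

theory Submission
  imports Defs
begin

lemma dist_one_iff:
  assumes "\<forall>u. (u, u) \<notin> A"
  shows "dist A u v = enat 1 \<longleftrightarrow> (u, v) \<in> A"
proof
  assume h: "dist A u v = enat 1"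
  then have ex: "\<exists>k. (u, v) \<in> A ^^ k" unfolding dist_def by (auto split: if_splits)
  with h have "(LEAST k. (u, v) \<in> A ^^ k) = 1" unfolding dist_def by auto
  moreover have "(u, v) \<in> A ^^ (LEAST k. (u, v) \<in> A ^^ k)" using ex by (rule LeastI_ex)
  ultimately show "(u, v) \<in> A" by simp
next
  assume h: "(u, v) \<in> A"
  then have "u \<noteq> v" using assms by auto
  have "(u, v) \<in> A ^^ 1" using h by simp
  moreover have "(LEAST k. (u, v) \<in> A ^^ k) = 1"
  proof (rule Least_equality)
    show "(u, v) \<in> A ^^ 1" using h by simp
    fix y assume "(u, v) \<in> A ^^ y"
    with \<open>u \<noteq> v\<close> show "1 \<le> y" by (cases y) auto
  qed
  ultimately show "dist A u v = enat 1" unfolding dist_def by (metis (no_types, lifting))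
qed

lemma two_elems:
  assumes "2 \<le> card S"
  obtains x y where "x \<in> S" "y \<in> S" "x \<noteq> y"
proof -
  have "finite S" using assms by (metis card.infinite not_numeral_le_zero)
  have "S \<noteq> {}" using assms by auto
  then obtain x where x: "x \<in> S" by auto
  have "card (S - {x}) \<ge> 1" using assms x \<open>finite S\<close> by auto
  then obtain y where "y \<in> S - {x}" by (metis card.empty ex_in_conv not_one_le_zero)
  then show ?thesis using x that by auto
qed

theorem mainTheorem1:
  fixes V :: "'a set" and A :: "('a \<times> 'a) set" and c :: 'a and n t :: nat
  assumes "n \<ge> 1" and "t \<le> n" and "oriented_star V A c n t"
  shows "D_antimagic V A {1} \<longleftrightarrow> (n = 1 \<or> (n = 2 \<and> t = 1))"
proof -
  define Src where "Src = {v \<in> V - {c}. (v, c) \<in> A}"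
  define Snk where "Snk = {v \<in> V - {c}. (c, v) \<in> A}"
  have finV: "finite V" and cV: "c \<in> V" and cardV: "card V = n + 1"
    and Asub: "A \<subseteq> ((V - {c}) \<times> {c}) \<union> ({c} \<times> (V - {c}))"
    and leaf: "\<And>v. v \<in> V - {c} \<Longrightarrow> ((v, c) \<in> A \<or> (c, v) \<in> A) \<and> \<not> ((v, c) \<in> A \<and> (c, v) \<in> A)"
    and cardSrc: "card Src = t"
    using assms(3) unfolding oriented_star_def Src_def by auto
  have noloop: "\<forall>u. (u, u) \<notin> A" using Asub by auto
  have N: "\<And>u. D_neighborhood V A {1} u = {v \<in> V. (u, v) \<in> A}"
    unfolding D_neighborhood_def using dist_one_iff[OF noloop] by (auto simp: one_enat_def)
  have Snk_eq: "Snk = (V - {c}) - Src" unfolding Snk_def Src_def using leaf by auto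
  have finL: "finite (V - {c})" using finV by auto
  have cardL: "card (V - {c}) = n" using cardV cV finV by auto
  have cardSnk: "card Snk = n - t"
    unfolding Snk_eq using cardSrc cardL finL by (subst card_Diff_subset) (auto simp: Src_def)
  have Nc: "D_neighborhood V A {1} c = Snk" unfolding N Snk_def using noloop by auto
  have Nsrc: "\<And>v. v \<in> Src \<Longrightarrow> D_neighborhood V A {1} v = {c}"
    unfolding N Src_def using Asub cV by auto
  have Nsnk: "\<And>v. v \<in> Snk \<Longrightarrow> D_neighborhood V A {1} v = {}"
    unfolding N Snk_def using Asub leaf by fastforce
  have Vsplit: "\<And>v. v \<in> V \<Longrightarrow> v = c \<or> v \<in> Src \<or> v \<in> Snk"
    unfolding Src_def Snk_def using leaf by auto
  have SrcSnk: "Src \<inter> Snk = {}" unfolding Snk_eq by auto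
  have cnot: "c \<notin> Src" "c \<notin> Snk" unfolding Src_def Snk_def by auto
  have Wsrc: "\<And>f v. v \<in> Src \<Longrightarrow> D_weight V A {1} f v = f c"
    unfolding D_weight_def using Nsrc by simp
  have Wsnk: "\<And>f v. v \<in> Snk \<Longrightarrow> D_weight V A {1} f v = 0"
    unfolding D_weight_def using Nsnk by simp
  have Wc: "\<And>f. D_weight V A {1} f c = sum f Snk"
    unfolding D_weight_def using Nc by simp
  have finSnk: "finite Snk" using finL unfolding Snk_def by (rule rev_finite_subset) auto
  have finSrc: "finite Src" using finL unfolding Src_def by (rule rev_finite_subset) auto
  have md: "1 \<le> max_dist V A"
  proof -
    have "card (V - {c}) \<ge> 1" using cardL assms(1) by simp
    then obtain v where v: "v \<in> V - {c}" by (metis card.empty ex_in_conv not_one_le_zero)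
    let ?S = "{k. \<exists>u\<in>V. \<exists>v\<in>V. dist A u v = enat k}"
    have "?S \<subseteq> (\<lambda>(u, v). the_enat (dist A u v)) ` (V \<times> V)"
      by (force simp: image_iff)
    then have finS: "finite ?S" using finV by (meson finite_SigmaI finite_imageI finite_subset)
    have "1 \<in> ?S" using leaf[OF v] v cV dist_one_iff[OF noloop] by blast
    then show ?thesis unfolding max_dist_def using finS by (simp add: Max_ge)
  qed
  have "D_antimagic V A {1} \<longleftrightarrow> (t \<le> 1 \<and> n - t \<le> 1)"
  proof
    assume "D_antimagic V A {1}"
    then obtain f where f: "bij_betw f V {1..card V}" and inj: "inj_on (D_weight V A {1} f) V"
      unfolding D_antimagic_def by auto
    show "t \<le> 1 \<and> n - t \<le> 1"
    proof (rule ccontr)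
      assume "\<not> (t \<le> 1 \<and> n - t \<le> 1)"
      then consider "2 \<le> card Src" | "2 \<le> card Snk" using cardSrc cardSnk by linarith
      then show False
      proof cases
        case 1
        then obtain x y where "x \<in> Src" "y \<in> Src" "x \<noteq> y" by (rule two_elems)
        then show False using inj Wsrc unfolding inj_on_def Src_def by (metis (no_types, lifting) DiffD1 mem_Collect_eq)
      next
        case 2
        then obtain x y where "x \<in> Snk" "y \<in> Snk" "x \<noteq> y" by (rule two_elems)
        then show False using inj Wsnk unfolding inj_on_def Snk_def by (metis (no_types, lifting) DiffD1 mem_Collect_eq)
      qed
    qed
  next
    assume h: "t \<le> 1 \<and> n - t \<le> 1"
    obtain g where "bij_betw g {1..card V} V" using finV ex_bij_betw_nat_finite_1 by blast
    then have f: "bij_betw (inv_into {1..card V} g) V {1..card V}" by (rule bij_betw_inv_into)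
    define f where "f = inv_into {1..card V} g"
    have fb: "bij_betw f V {1..card V}" using f f_def by simp
    have fpos: "\<And>v. v \<in> V \<Longrightarrow> f v \<ge> 1" using fb by (auto dest: bij_betw_apply)
    have finj: "inj_on f V" using fb bij_betw_imp_inj_on by blast
    have SrcV: "Src \<subseteq> V" and SnkV: "Snk \<subseteq> V" unfolding Src_def Snk_def by auto
    have src1: "\<And>x y. x \<in> Src \<Longrightarrow> y \<in> Src \<Longrightarrow> x = y"
      using h cardSrc finSrc card_le_Suc0_iff_eq[of Src] by (metis One_nat_def)
    have snk1: "\<And>x y. x \<in> Snk \<Longrightarrow> y \<in> Snk \<Longrightarrow> x = y"
      using h cardSnk finSnk card_le_Suc0_iff_eq[of Snk] by (metis One_nat_def)
    have W1: "D_weight V A {1} f c \<noteq> D_weight V A {1} f y" if y: "y \<in> V" "y \<noteq> c" for y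
    proof -
      consider "y \<in> Src" | "y \<in> Snk" using Vsplit y by blast
      then show ?thesis
      proof cases
        case 1
        show ?thesis
        proof (cases "Snk = {}")
          case True then show ?thesis using Wc Wsrc[OF 1] fpos[OF cV] by simp
        next
          case False
          then obtain k where k: "k \<in> Snk" by auto
          then have "Snk = {k}" using snk1 by auto
          then have "sum f Snk = f k" by simp
          moreover have "f k \<noteq> f c" using finj k SnkV cV cnot unfolding inj_on_def by auto
          ultimately show ?thesis using Wc Wsrc[OF 1] by simp
        qed
      next
        case 2
        have "f y \<le> sum f Snk" using finSnk 2 by (simp add: member_le_sum)
        then show ?thesis using Wc Wsnk[OF 2] fpos[OF \<open>y \<in> V\<close>] by simp
      qed
    qed
    have "inj_on (D_weight V A {1} f) V"
    proof (rule inj_onI, rule ccontr)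
      fix x y assume x: "x \<in> V" and y: "y \<in> V" and eq: "D_weight V A {1} f x = D_weight V A {1} f y"
        and ne: "x \<noteq> y"
      show False
      proof (cases "x = c \<or> y = c")
        case True
        then show ?thesis using W1 x y eq ne by metis
      next
        case False
        then have "(x \<in> Src \<or> x \<in> Snk) \<and> (y \<in> Src \<or> y \<in> Snk)" using Vsplit x y by blast
        then show ?thesis using src1 snk1 ne eq Wsrc Wsnk fpos[OF cV] by force
      qed
    qed
    then show "D_antimagic V A {1}" unfolding D_antimagic_def using fb md by auto
  qed
  also have "\<dots> \<longleftrightarrow> (n = 1 \<or> (n = 2 \<and> t = 1))" using assms(1,2) by auto
  finally show ?thesis .
qed

end
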